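(* If $\mathbb{K}=(K,+,0)$ is a positive commutative monoid that is weakly cancellative and totally canonically pre-ordered, then the inner consistency property holds for $\mathbb{K}$-relations via the northwest corner method: for any two $\mathbb{K}$-relations $R(X)$, $S(Y)$ with $R[X\cap Y]=S[X\cap Y]$, the northwest corner procedure can be carried out and every northwest corner join $W$ for $R$ and $S$ satisfies $W[X]=R$ and $W[Y]=S$.
   Context: Positive: $p+q=0\Rightarrow p=q=0$. Canonical pre-order: $b\sqsubseteq c$ iff $b+a=c$ for some $a$. Weakly cancellative: $a+b=a+c$ implies $b=c$ or $b=0$ or $c=0$. Totally canonically pre-ordered: $b\sqsubseteq c$ or $c\sqsubseteq b$ for all $b,c$. $\mathbb{K}$-relations: for a finite attribute set $X$ (attributes have domains), a $\mathbb{K}$-relation over $X$ is a finitely supported map $R$ from $X$-tuples (assignments of domain values to attributes) to $K$, support $R'$; $t[Y]$ is restriction; marginals $R[Y](t)=\sum_{r\in R',r[Y]=t}R(r)$. Northwest corner method on a balanced instance $b\in K^m$, $c\in K^n$ ($\sum b_i=\sum c_j$), producing $x_{ij}\in K$: first, for each $i$ with $b_i=0$ set row $i$ of $x$ to $0$ and delete it, likewise for columns with $c_j=0$. If $m=1$ set $x_{1j}=c_j$; if $n=1$ set $x_{i1}=b_i$. Otherwise: if $b_1=c_1$, set $x_{11}=b_1$, the other entries of row 1 and column 1 to $0$, and recurse on $(b_2,\dots,b_m),(c_2,\dots,c_n)$; else if $b_1\sqsubseteq c_1$, choose $a$ with $b_1+a=c_1$, set $x_{11}=b_1$ and $x_{1j}=0$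 for $j\ge2$, and recurse on rows $2..m$ with $(b_2,\dots,b_m)$ and $(a,c_2,\dots,c_n)$; else ($c_1\sqsubseteq b_1$) symmetrically with rows and columns exchanged. A northwest corner join for inner consistent $R(X),S(Y)$ with $Z=X\cap Y$: for each $Z$-tuple $w$ in the support of $R[Z]$, enumerate in any order the $X$-tuples $u_1,\dots,u_p\in R'$ with $u_i[Z]=w$ and the $Y$-tuples $v_1,\dots,v_q\in S'$ with $v_j[Z]=w$, apply the method to $b=(R(u_i))_i$, $c=(S(v_j))_j$, and set $W(u_iv_j)=x_{ij}$ (where $u_iv_j$ is the $X\cup Y$-tuple agreeing with both); $W$ is $0$ on all other $X\cup Y$-tuples. *)

theory Defs
  imports Main
begin

definition positive_monoid :: "'k::comm_monoid_add itself \<Rightarrow> bool" where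
  "positive_monoid _ \<longleftrightarrow> (\<forall>p q::'k. p + q = 0 \<longrightarrow> p = 0 \<and> q = 0)"

definition canon_le :: "'k::comm_monoid_add \<Rightarrow> 'k \<Rightarrow> bool" where
  "canon_le b c \<longleftrightarrow> (\<exists>a. b + a = c)"

definition weakly_cancellative :: "'k::comm_monoid_add itself \<Rightarrow> bool" where
  "weakly_cancellative _ \<longleftrightarrow>
     (\<forall>a b c::'k. a + b = a + c \<longrightarrow> b = c \<or> b = 0 \<or> c = 0)"

definition totally_canon_preordered :: "'k::comm_monoid_add itself \<Rightarrow> bool" where
  "totally_canon_preordered _ \<longleftrightarrow> (\<forall>b c::'k. canon_le b c \<or> canon_le c b)"

text \<open>Instances are lists of labelled entries (label, value); the output matrix
  is indexed by labels. A row/column keeps its label when its value is replaced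
  by the residual a. The relation nwc b c x holds iff x is a possible output
  of the (nondeterministic: choice of a) northwest corner method on b, c.\<close>

inductive nwc :: "('i \<times> 'k::comm_monoid_add) list \<Rightarrow> ('j \<times> 'k) list \<Rightarrow> ('i \<Rightarrow> 'j \<Rightarrow> 'k) \<Rightarrow> bool"
where
  zero_del:
    "(\<exists>p\<in>set b. snd p = 0) \<or> (\<exists>p\<in>set c. snd p = 0) \<Longrightarrow>
     nwc (filter (\<lambda>p. snd p \<noteq> 0) b) (filter (\<lambda>p. snd p \<noteq> 0) c) x \<Longrightarrow>
     nwc b c (\<lambda>i j. if i \<in> fst ` {p\<in>set b. snd p = 0} \<or> j \<in> fst ` {p\<in>set c. snd p = 0}
                    then 0 else x i j)"
| empty: "nwc [] [] (\<lambda>i j. 0)"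
| one_row:
    "\<forall>p\<in>set c. snd p \<noteq> 0 \<Longrightarrow> snd b1 \<noteq> 0 \<Longrightarrow>
     nwc [b1] c (\<lambda>i j. if i = fst b1 then (case map_of c j of Some v \<Rightarrow> v | None \<Rightarrow> 0) else 0)"
| one_col:
    "\<forall>p\<in>set b. snd p \<noteq> 0 \<Longrightarrow> snd c1 \<noteq> 0 \<Longrightarrow> length b \<noteq> 1 \<Longrightarrow>
     nwc b [c1] (\<lambda>i j. if j = fst c1 then (case map_of b i of Some v \<Rightarrow> v | None \<Rightarrow> 0) else 0)"
| equal:
    "\<forall>p\<in>set (b1 # bs). snd p \<noteq> 0 \<Longrightarrow> \<forall>p\<in>set (c1 # cs). snd p \<noteq> 0 \<Longrightarrow>
     bs \<noteq> [] \<Longrightarrow> cs \<noteq> [] \<Longrightarrow> snd b1 = snd c1 \<Longrightarrow>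
     nwc bs cs x \<Longrightarrow>
     nwc (b1 # bs) (c1 # cs)
       (\<lambda>i j. if i = fst b1 \<and> j = fst c1 then snd b1
              else if i = fst b1 \<or> j = fst c1 then 0 else x i j)"
| row_first:
    "\<forall>p\<in>set (b1 # bs). snd p \<noteq> 0 \<Longrightarrow> \<forall>p\<in>set (c1 # cs). snd p \<noteq> 0 \<Longrightarrow>
     bs \<noteq> [] \<Longrightarrow> cs \<noteq> [] \<Longrightarrow> snd b1 \<noteq> snd c1 \<Longrightarrow>
     snd b1 + a = snd c1 \<Longrightarrow>
     nwc bs ((fst c1, a) # cs) x \<Longrightarrow>
     nwc (b1 # bs) (c1 # cs)
       (\<lambda>i j. if i = fst b1 then (if j = fst c1 then snd b1 else 0) else x i j)"
| col_first:
    "\<forall>p\<in>set (b1 # bs). snd p \<noteq> 0 \<Longrightarrow> \<forall>p\<in>set (c1 # cs). snd p \<noteq> 0 \<Longrightarrow>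
     bs \<noteq> [] \<Longrightarrow> cs \<noteq> [] \<Longrightarrow> snd b1 \<noteq> snd c1 \<Longrightarrow>
     \<not> canon_le (snd b1) (snd c1) \<Longrightarrow>
     snd c1 + a = snd b1 \<Longrightarrow>
     nwc ((fst b1, a) # bs) cs x \<Longrightarrow>
     nwc (b1 # bs) (c1 # cs)
       (\<lambda>i j. if j = fst c1 then (if i = fst b1 then snd c1 else 0) else x i j)"

text \<open>Tuples are partial maps from attributes to values; D gives attribute domains.\<close>

definition is_tuple :: "('a \<Rightarrow> 'v set) \<Rightarrow> 'a set \<Rightarrow> ('a \<rightharpoonup> 'v) \<Rightarrow> bool" where
  "is_tuple D X t \<longleftrightarrow> dom t = X \<and> (\<forall>x\<in>X. the (t x) \<in> D x)"

definition supp :: "(('a \<rightharpoonup> 'v) \<Rightarrow> 'k::zero) \<Rightarrow> ('a \<rightharpoonup> 'v) set" where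
  "supp R = {t. R t \<noteq> 0}"

definition is_krel :: "('a \<Rightarrow> 'v set) \<Rightarrow> 'a set \<Rightarrow> (('a \<rightharpoonup> 'v) \<Rightarrow> 'k::zero) \<Rightarrow> bool" where
  "is_krel D X R \<longleftrightarrow> finite (supp R) \<and> (\<forall>t\<in>supp R. is_tuple D X t)"

definition marg :: "(('a \<rightharpoonup> 'v) \<Rightarrow> 'k::comm_monoid_add) \<Rightarrow> 'a set \<Rightarrow> ('a \<rightharpoonup> 'v) \<Rightarrow> 'k" where
  "marg R Y t = (\<Sum>r\<in>{r\<in>supp R. r |` Y = t}. R r)"

definition enumerates :: "(('a \<rightharpoonup> 'v) \<Rightarrow> 'k::zero) \<Rightarrow> 'a set \<Rightarrow> ('a \<rightharpoonup> 'v) \<Rightarrow> ('a \<rightharpoonup> 'v) list \<Rightarrow> bool" where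
  "enumerates R Z w us \<longleftrightarrow> distinct us \<and> set us = {u\<in>supp R. u |` Z = w}"

definition nwc_join ::
  "'a set \<Rightarrow> 'a set \<Rightarrow> (('a \<rightharpoonup> 'v) \<Rightarrow> 'k::comm_monoid_add) \<Rightarrow> (('a \<rightharpoonup> 'v) \<Rightarrow> 'k)
     \<Rightarrow> (('a \<rightharpoonup> 'v) \<Rightarrow> 'k) \<Rightarrow> bool" where
  "nwc_join X Y R S W \<longleftrightarrow>
     (\<exists>ul vl xs.
        (\<forall>w\<in>supp (marg R (X \<inter> Y)).
            enumerates R (X \<inter> Y) w (ul w) \<and> enumerates S (X \<inter> Y) w (vl w) \<and>
            nwc (map (\<lambda>u. (u, R u)) (ul w)) (map (\<lambda>v. (v, S v)) (vl w)) (xs w)) \<and>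
        (\<forall>t. W t =
            (if dom t = X \<union> Y \<and> t |` (X \<inter> Y) \<in> supp (marg R (X \<inter> Y))
                \<and> t |` X \<in> set (ul (t |` (X \<inter> Y))) \<and> t |` Y \<in> set (vl (t |` (X \<inter> Y)))
             then xs (t |` (X \<inter> Y)) (t |` X) (t |` Y) else 0)))"

end

theory Submission imports Defs begin

lemma pos_add:
  assumes "positive_monoid TYPE('k::comm_monoid_add)"
  shows "((a::'k) + b = 0) = (a = 0 \<and> b = 0)"
proof
  assume "a + b = 0"
  then show "a = 0 \<and> b = 0" using assms unfolding positive_monoid_def by blast
next
  assume "a = 0 \<and> b = 0"
  then show "a + b = 0" by simp
qed

lemma pos_sum_list:
  assumes "positive_monoid TYPE('k::comm_monoid_add)"
  shows "(sum_list (xs::'k list) = 0) = (\<forall>x\<in>set xs. x = 0)"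
  by (induction xs) (simp_all add: pos_add[OF assms])

lemma pos_sum:
  assumes "positive_monoid TYPE('k::comm_monoid_add)" and "finite A"
  shows "(sum (f::_\<Rightarrow>'k) A = 0) = (\<forall>x\<in>A. f x = 0)"
  using assms(2) by (induction A rule: finite_induct) (simp_all add: pos_add[OF assms(1)])

lemma wcancel:
  assumes "weakly_cancellative TYPE('k::comm_monoid_add)"
    and "(b::'k) + s = b + t" "s \<noteq> 0" "t \<noteq> 0"
  shows "s = t"
  using assms unfolding weakly_cancellative_def by blast

lemma sum_list_map_zero: "(\<forall>q\<in>set cs. f q = 0) \<Longrightarrow> sum_list (map f cs) = (0::'k::comm_monoid_add)"
  by (induction cs) auto

lemma sum_list_map_cong: "(\<forall>q\<in>set cs. f q = g q) \<Longrightarrow> sum_list (map f cs) = (sum_list (map g cs)::'k::comm_monoid_add)"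
  by (metis map_cong)

lemma nwc_sums:
  assumes P: "positive_monoid TYPE('k::comm_monoid_add)"
    and WC: "weakly_cancellative TYPE('k)"
  shows "nwc b c (x::'i \<Rightarrow> 'j \<Rightarrow> 'k) \<Longrightarrow> \<forall>p\<in>set b. snd p \<noteq> 0 \<Longrightarrow> \<forall>p\<in>set c. snd p \<noteq> 0 \<Longrightarrow>
    distinct (map fst b) \<Longrightarrow> distinct (map fst c) \<Longrightarrow> sum_list (map snd b) = sum_list (map snd c) \<Longrightarrow>
    (\<forall>p\<in>set b. sum_list (map (\<lambda>q. x (fst p) (fst q)) c) = snd p) \<and>
    (\<forall>q\<in>set c. sum_list (map (\<lambda>p. x (fst p) (fst q)) b) = snd q)"
proof (induction rule: nwc.induct)
  case (zero_del b c x)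
  then show ?case by auto
next
  case empty
  then show ?case by simp
next
  case (one_row c b1)
  have mo: "\<forall>q\<in>set c. map_of c (fst q) = Some (snd q)" using one_row.prems by auto
  have e: "map (\<lambda>q. case map_of c (fst q) of Some v \<Rightarrow> v | None \<Rightarrow> 0) c = map snd c"
    using mo by (intro map_cong) auto
  have s1: "sum_list (map (\<lambda>q. case map_of c (fst q) of Some v \<Rightarrow> v | None \<Rightarrow> 0) c) = sum_list (map snd c)"
    by (simp only: e)
  show ?case using one_row.prems(5) s1 mo by simp
next
  case (one_col b c1)
  have mo: "\<forall>q\<in>set b. map_of b (fst q) = Some (snd q)" using one_col.prems by auto
  have e: "map (\<lambda>q. case map_of b (fst q) of Some v \<Rightarrow> v | None \<Rightarrow> 0) b = map snd b"
    using mo by (intro map_cong) auto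
  have s1: "sum_list (map (\<lambda>q. case map_of b (fst q) of Some v \<Rightarrow> v | None \<Rightarrow> 0) b) = sum_list (map snd b)"
    by (simp only: e)
  show ?case using one_col.prems(5) s1 mo by simp
next
  case (equal b1 bs c1 cs x)
  have nb: "sum_list (map snd bs) \<noteq> 0" using equal.hyps pos_sum_list[OF P, of "map snd bs"]
    by (cases bs) auto
  have nc: "sum_list (map snd cs) \<noteq> 0" using equal.hyps pos_sum_list[OF P, of "map snd cs"]
    by (cases cs) auto
  have bal: "sum_list (map snd bs) = sum_list (map snd cs)"
    using wcancel[OF WC _ nb nc] equal.prems equal.hyps by simp
  note IH = equal.IH[OF _ _ _ _ bal]
  have IH1: "\<forall>p\<in>set bs. sum_list (map (\<lambda>q. x (fst p) (fst q)) cs) = snd p"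
    and IH2: "\<forall>q\<in>set cs. sum_list (map (\<lambda>p. x (fst p) (fst q)) bs) = snd q"
    using IH equal.prems by auto
  have d1: "fst b1 \<notin> fst ` set bs" and d2: "fst c1 \<notin> fst ` set cs"
    using equal.prems by auto
  have z1: "\<forall>p\<in>set bs. fst p \<noteq> fst b1"
  proof
    fix p assume "p \<in> set bs"
    then have m: "fst p \<in> fst ` set bs" by (rule imageI)
    show "fst p \<noteq> fst b1"
    proof
      assume "fst p = fst b1"
      then show False using m d1 by simp
    qed
  qed
  have z2: "\<forall>q\<in>set cs. fst q \<noteq> fst c1"
  proof
    fix q assume "q \<in> set cs"
    then have m: "fst q \<in> fst ` set cs" by (rule imageI)
    show "fst q \<noteq> fst c1"
    proof
      assume "fst q = fst c1"
      then show False using m d2 by simp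
    qed
  qed
  show ?case
  proof (intro conjI ballI)
    fix p assume "p \<in> set (b1 # bs)"
    then have "p = b1 \<or> p \<in> set bs" by simp
    then show "sum_list (map (\<lambda>q. (\<lambda>i j. if i = fst b1 \<and> j = fst c1 then snd b1
              else if i = fst b1 \<or> j = fst c1 then 0 else x i j) (fst p) (fst q)) (c1 # cs)) = snd p"
    proof
      assume "p = b1"
      then show ?thesis using z2 by (simp add: sum_list_map_zero)
    next
      assume pb: "p \<in> set bs"
      then have ne: "fst p \<noteq> fst b1" using z1 by blast
      have "sum_list (map (\<lambda>q. (\<lambda>i j. if i = fst b1 \<and> j = fst c1 then snd b1
              else if i = fst b1 \<or> j = fst c1 then 0 else x i j) (fst p) (fst q)) cs)
            = sum_list (map (\<lambda>q. x (fst p) (fst q)) cs)"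
        using z2 ne by (intro sum_list_map_cong) auto
      then show ?thesis using pb IH1 ne by simp
    qed
  next
    fix q assume "q \<in> set (c1 # cs)"
    then have "q = c1 \<or> q \<in> set cs" by simp
    then show "sum_list (map (\<lambda>p. (\<lambda>i j. if i = fst b1 \<and> j = fst c1 then snd b1
              else if i = fst b1 \<or> j = fst c1 then 0 else x i j) (fst p) (fst q)) (b1 # bs)) = snd q"
    proof
      assume "q = c1"
      then show ?thesis using z1 equal.hyps by (simp add: sum_list_map_zero)
    next
      assume qc: "q \<in> set cs"
      then have ne: "fst q \<noteq> fst c1" using z2 by blast
      have "sum_list (map (\<lambda>p. (\<lambda>i j. if i = fst b1 \<and> j = fst c1 then snd b1
              else if i = fst b1 \<or> j = fst c1 then 0 else x i j) (fst p) (fst q)) bs)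
            = sum_list (map (\<lambda>p. x (fst p) (fst q)) bs)"
        using z1 ne by (intro sum_list_map_cong) auto
      then show ?thesis using qc IH2 ne by simp
    qed
  qed
next
  case (row_first b1 bs c1 cs a x)
  have a0: "a \<noteq> 0" using row_first.hyps by auto
  have nb: "sum_list (map snd bs) \<noteq> 0" using row_first.hyps pos_sum_list[OF P, of "map snd bs"]
    by (cases bs) auto
  have nc: "a + sum_list (map snd cs) \<noteq> 0" using a0 P unfolding positive_monoid_def by blast
  have "snd b1 + sum_list (map snd bs) = snd b1 + (a + sum_list (map snd cs))"
  proof -
    have "snd b1 + sum_list (map snd bs) = snd c1 + sum_list (map snd cs)"
      using row_first.prems(5) by simp
    also have "\<dots> = (snd b1 + a) + sum_list (map snd cs)" using \<open>snd b1 + a = snd c1\<close> by simp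
    also have "\<dots> = snd b1 + (a + sum_list (map snd cs))" by (rule add.assoc)
    finally show ?thesis .
  qed
  then have bal: "sum_list (map snd bs) = sum_list (map snd ((fst c1, a) # cs))"
    using wcancel[OF WC _ nb nc] by simp
  have IH: "(\<forall>p\<in>set bs. sum_list (map (\<lambda>q. x (fst p) (fst q)) ((fst c1, a) # cs)) = snd p) \<and>
    (\<forall>q\<in>set ((fst c1, a) # cs). sum_list (map (\<lambda>p. x (fst p) (fst q)) bs) = snd q)"
    using row_first.IH[OF _ _ _ _ bal] row_first.prems row_first.hyps a0 by auto
  have IH1: "\<forall>p\<in>set bs. sum_list (map (\<lambda>q. x (fst p) (fst q)) (c1 # cs)) = snd p"
    and IH2: "\<forall>q\<in>set cs. sum_list (map (\<lambda>p. x (fst p) (fst q)) bs) = snd q"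
    and IH3: "sum_list (map (\<lambda>p. x (fst p) (fst c1)) bs) = a"
    using IH by auto
  have d1: "fst b1 \<notin> fst ` set bs" and d2: "fst c1 \<notin> fst ` set cs"
    using row_first.prems by auto
  have z1: "\<forall>p\<in>set bs. fst p \<noteq> fst b1"
  proof
    fix p assume "p \<in> set bs"
    then have m: "fst p \<in> fst ` set bs" by (rule imageI)
    show "fst p \<noteq> fst b1"
    proof
      assume "fst p = fst b1"
      then show False using m d1 by simp
    qed
  qed
  have z2: "\<forall>q\<in>set cs. fst q \<noteq> fst c1"
  proof
    fix q assume "q \<in> set cs"
    then have m: "fst q \<in> fst ` set cs" by (rule imageI)
    show "fst q \<noteq> fst c1"
    proof
      assume "fst q = fst c1"
      then show False using m d2 by simp
    qed
  qed
  show ?case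
  proof (intro conjI ballI)
    fix p assume "p \<in> set (b1 # bs)"
    then have "p = b1 \<or> p \<in> set bs" by simp
    then show "sum_list (map (\<lambda>q. (\<lambda>i j. if i = fst b1 then (if j = fst c1 then snd b1 else 0) else x i j) (fst p) (fst q)) (c1 # cs)) = snd p"
    proof
      assume "p = b1"
      then show ?thesis using z2 by (simp add: sum_list_map_zero)
    next
      assume pb: "p \<in> set bs"
      then have "fst p \<noteq> fst b1" using z1 by blast
      then show ?thesis using pb IH1 by auto
    qed
  next
    fix q assume "q \<in> set (c1 # cs)"
    then have "q = c1 \<or> q \<in> set cs" by simp
    then show "sum_list (map (\<lambda>p. (\<lambda>i j. if i = fst b1 then (if j = fst c1 then snd b1 else 0) else x i j) (fst p) (fst q)) (b1 # bs)) = snd q"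
    proof
      assume "q = c1"
      have "sum_list (map (\<lambda>p. (\<lambda>i j. if i = fst b1 then (if j = fst c1 then snd b1 else 0) else x i j) (fst p) (fst c1)) bs)
            = sum_list (map (\<lambda>p. x (fst p) (fst c1)) bs)"
        using z1 by (intro sum_list_map_cong) auto
      note e = this
      show ?thesis unfolding \<open>q = c1\<close> list.map(2) sum_list.Cons e
        using IH3 row_first.hyps by simp
    next
      assume qc: "q \<in> set cs"
      then have ne: "fst q \<noteq> fst c1" using z2 by blast
      have "sum_list (map (\<lambda>p. (\<lambda>i j. if i = fst b1 then (if j = fst c1 then snd b1 else 0) else x i j) (fst p) (fst q)) bs)
            = sum_list (map (\<lambda>p. x (fst p) (fst q)) bs)"
        using z1 by (intro sum_list_map_cong) auto
      then show ?thesis using qc IH2 ne by simp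
    qed
  qed
next
  case (col_first b1 bs c1 cs a x)
  have a0: "a \<noteq> 0" using col_first.hyps by auto
  have nc: "sum_list (map snd cs) \<noteq> 0" using col_first.hyps pos_sum_list[OF P, of "map snd cs"]
    by (cases cs) auto
  have nb: "a + sum_list (map snd bs) \<noteq> 0" using a0 P unfolding positive_monoid_def by blast
  have "snd c1 + (a + sum_list (map snd bs)) = snd c1 + sum_list (map snd cs)"
  proof -
    have "snd c1 + (a + sum_list (map snd bs)) = (snd c1 + a) + sum_list (map snd bs)"
      by (rule add.assoc[symmetric])
    also have "\<dots> = snd b1 + sum_list (map snd bs)" using \<open>snd c1 + a = snd b1\<close> by simp
    also have "\<dots> = snd c1 + sum_list (map snd cs)" using col_first.prems(5) by simp
    finally show ?thesis .
  qed
  then have bal: "sum_list (map snd ((fst b1, a) # bs)) = sum_list (map snd cs)"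
    using wcancel[OF WC _ nb nc] by simp
  have IH: "(\<forall>p\<in>set ((fst b1, a) # bs). sum_list (map (\<lambda>q. x (fst p) (fst q)) cs) = snd p) \<and>
    (\<forall>q\<in>set cs. sum_list (map (\<lambda>p. x (fst p) (fst q)) ((fst b1, a) # bs)) = snd q)"
    using col_first.IH[OF _ _ _ _ bal] col_first.prems col_first.hyps a0 by auto
  have IH1: "\<forall>p\<in>set bs. sum_list (map (\<lambda>q. x (fst p) (fst q)) cs) = snd p"
    and IH2: "\<forall>q\<in>set cs. sum_list (map (\<lambda>p. x (fst p) (fst q)) (b1 # bs)) = snd q"
    and IH3: "sum_list (map (\<lambda>q. x (fst b1) (fst q)) cs) = a"
    using IH by auto
  have d1: "fst b1 \<notin> fst ` set bs" and d2: "fst c1 \<notin> fst ` set cs"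
    using col_first.prems by auto
  have z1: "\<forall>p\<in>set bs. fst p \<noteq> fst b1"
  proof
    fix p assume "p \<in> set bs"
    then have m: "fst p \<in> fst ` set bs" by (rule imageI)
    show "fst p \<noteq> fst b1"
    proof
      assume "fst p = fst b1"
      then show False using m d1 by simp
    qed
  qed
  have z2: "\<forall>q\<in>set cs. fst q \<noteq> fst c1"
  proof
    fix q assume "q \<in> set cs"
    then have m: "fst q \<in> fst ` set cs" by (rule imageI)
    show "fst q \<noteq> fst c1"
    proof
      assume "fst q = fst c1"
      then show False using m d2 by simp
    qed
  qed
  show ?case
  proof (intro conjI ballI)
    fix q assume "q \<in> set (c1 # cs)"
    then have "q = c1 \<or> q \<in> set cs" by simp
    then show "sum_list (map (\<lambda>p. (\<lambda>i j. if j = fst c1 then (if i = fst b1 then snd c1 else 0) else x i j) (fst p) (fst q)) (b1 # bs)) = snd q"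
    proof
      assume "q = c1"
      then show ?thesis using z1 by (simp add: sum_list_map_zero)
    next
      assume qc: "q \<in> set cs"
      then have "fst q \<noteq> fst c1" using z2 by blast
      then show ?thesis using qc IH2 by auto
    qed
  next
    fix p assume "p \<in> set (b1 # bs)"
    then have "p = b1 \<or> p \<in> set bs" by simp
    then show "sum_list (map (\<lambda>q. (\<lambda>i j. if j = fst c1 then (if i = fst b1 then snd c1 else 0) else x i j) (fst p) (fst q)) (c1 # cs)) = snd p"
    proof
      assume "p = b1"
      have "sum_list (map (\<lambda>q. (\<lambda>i j. if j = fst c1 then (if i = fst b1 then snd c1 else 0) else x i j) (fst b1) (fst q)) cs)
            = sum_list (map (\<lambda>q. x (fst b1) (fst q)) cs)"
        using z2 by (intro sum_list_map_cong) auto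
      note e = this
      show ?thesis unfolding \<open>p = b1\<close> list.map(2) sum_list.Cons e
        using IH3 col_first.hyps by simp
    next
      assume pb: "p \<in> set bs"
      then have ne: "fst p \<noteq> fst b1" using z1 by blast
      have "sum_list (map (\<lambda>q. (\<lambda>i j. if j = fst c1 then (if i = fst b1 then snd c1 else 0) else x i j) (fst p) (fst q)) cs)
            = sum_list (map (\<lambda>q. x (fst p) (fst q)) cs)"
        using z2 by (intro sum_list_map_cong) auto
      then show ?thesis using pb IH1 ne by simp
    qed
  qed
qed

lemma nwc_exists:
  assumes P: "positive_monoid TYPE('k::comm_monoid_add)"
    and WC: "weakly_cancellative TYPE('k)"
    and T: "totally_canon_preordered TYPE('k)"
  shows "\<forall>p\<in>set b. snd p \<noteq> (0::'k) \<Longrightarrow> \<forall>p\<in>set c. snd p \<noteq> (0::'k) \<Longrightarrow>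
    sum_list (map snd b) = sum_list (map snd c) \<Longrightarrow> \<exists>x. nwc b c x"
proof (induction "length b + length c" arbitrary: b c rule: less_induct)
  case less
  show ?case
  proof (cases b)
    case Nil
    then have "sum_list (map snd c) = 0" using less.prems by simp
    then have "c = []" using pos_sum_list[OF P, of "map snd c"] less.prems by (cases c) auto
    then show ?thesis using Nil nwc.empty by blast
  next
    case (Cons b1 bs)
    show ?thesis
    proof (cases "bs = []")
      case True
      then show ?thesis using Cons less.prems nwc.one_row by fastforce
    next
      case bsne: False
      have nb: "sum_list (map snd bs) \<noteq> 0" using bsne less.prems Cons pos_sum_list[OF P, of "map snd bs"]
        by (cases bs) auto
      show ?thesis
      proof (cases c)
        case Nil
        have "sum_list (map snd b) = 0" using less.prems Nil by simp
        then show ?thesis using pos_sum_list[OF P, of "map snd b"] less.prems Cons by auto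
      next
        case Cons2: (Cons c1 cs)
        show ?thesis
        proof (cases "cs = []")
          case True
          then show ?thesis using Cons Cons2 bsne less.prems nwc.one_col[of b c1] by auto
        next
          case csne: False
          have nc: "sum_list (map snd cs) \<noteq> 0" using csne less.prems Cons2 pos_sum_list[OF P, of "map snd cs"]
            by (cases cs) auto
          have bal0: "snd b1 + sum_list (map snd bs) = snd c1 + sum_list (map snd cs)"
            using less.prems Cons Cons2 by simp
          show ?thesis
          proof (cases "snd b1 = snd c1")
            case True
            have "sum_list (map snd bs) = sum_list (map snd cs)"
              using wcancel[OF WC _ nb nc] bal0 True by simp
            then obtain x where "nwc bs cs x"
              using less.hyps[of bs cs] less.prems Cons Cons2 by auto
            then show ?thesis using nwc.equal[of b1 bs c1 cs x] less.prems Cons Cons2 bsne csne True by auto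
          next
            case neq: False
            show ?thesis
            proof (cases "canon_le (snd b1) (snd c1)")
              case True
              then obtain a where a: "snd b1 + a = snd c1" unfolding canon_le_def by blast
              have a0: "a \<noteq> 0" using a neq by auto
              have nc2: "a + sum_list (map snd cs) \<noteq> 0" using a0 P unfolding positive_monoid_def by blast
              have "snd b1 + sum_list (map snd bs) = snd b1 + (a + sum_list (map snd cs))"
                using bal0 a by (metis add.assoc)
              then have "sum_list (map snd bs) = sum_list (map snd ((fst c1, a) # cs))"
                using wcancel[OF WC _ nb nc2] by simp
              then obtain x where "nwc bs ((fst c1, a) # cs) x"
                using less.hyps[of bs "(fst c1, a) # cs"] less.prems Cons Cons2 a0 by auto
              then show ?thesis using nwc.row_first[of b1 bs c1 cs a x] less.prems Cons Cons2 bsne csne neq a by auto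
            next
              case False
              then obtain a where a: "snd c1 + a = snd b1" using T unfolding totally_canon_preordered_def canon_le_def by blast
              have a0: "a \<noteq> 0" using a neq by auto
              have nb2: "a + sum_list (map snd bs) \<noteq> 0" using a0 P unfolding positive_monoid_def by blast
              have "snd c1 + (a + sum_list (map snd bs)) = snd c1 + sum_list (map snd cs)"
                using bal0 a by (metis add.assoc)
              then have "sum_list (map snd ((fst b1, a) # bs)) = sum_list (map snd cs)"
                using wcancel[OF WC _ nb2 nc] by simp
              then obtain x where "nwc ((fst b1, a) # bs) cs x"
                using less.hyps[of "(fst b1, a) # bs" cs] less.prems Cons Cons2 a0 by auto
              then show ?thesis using nwc.col_first[of b1 bs c1 cs a x] less.prems Cons Cons2 bsne csne neq a False by auto
            qed
          qed
        qed
      qed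
    qed
  qed
qed

lemma map_add_restrict:
  assumes "dom r = X" "dom v = Y" "r |` (X \<inter> Y) = v |` (X \<inter> Y)"
  shows "(r ++ v) |` X = r" "(r ++ v) |` Y = v"
proof -
  show "(r ++ v) |` X = r"
  proof
    fix x show "((r ++ v) |` X) x = r x"
    proof (cases "x \<in> X")
      case True
      show ?thesis
      proof (cases "x \<in> Y")
        case True2: True
        have "r x = v x" using fun_cong[OF assms(3), of x] True True2 by simp
        then show ?thesis using True by (auto simp: map_add_def split: option.splits)
      next
        case False
        then have "v x = None" using assms(2) by auto
        then show ?thesis using True by (simp add: map_add_def)
      qed
    next
      case False
      then have "r x = None" using assms(1) by auto
      then show ?thesis using False by simp
    qed
  qed
  show "(r ++ v) |` Y = v"
  proof
    fix x show "((r ++ v) |` Y) x = v x"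
    proof (cases "x \<in> Y")
      case True
      then obtain y where "v x = Some y" using assms(2) by auto
      then show ?thesis using True by simp
    next
      case False
      then show ?thesis using assms(2) by auto
    qed
  qed
qed

lemma split_tuple:
  assumes "dom t = X \<union> Y"
  shows "t = (t |` X) ++ (t |` Y)"
proof
  fix x show "t x = ((t |` X) ++ (t |` Y)) x"
    using assms by (cases "x \<in> Y"; cases "x \<in> X") (auto simp: map_add_def restrict_map_def split: option.splits)
qed

theorem proposition24:
  fixes D :: "'a \<Rightarrow> 'v set" and X Y :: "'a set"
    and R S :: "('a \<rightharpoonup> 'v) \<Rightarrow> 'k::comm_monoid_add"
  assumes "positive_monoid TYPE('k)"
    and "weakly_cancellative TYPE('k)"
    and "totally_canon_preordered TYPE('k)"
    and "finite X" and "finite Y"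
    and "is_krel D X R" and "is_krel D Y S"
    and "marg R (X \<inter> Y) = marg S (X \<inter> Y)"
  shows "(\<forall>w\<in>supp (marg R (X \<inter> Y)). \<forall>us vs.
            enumerates R (X \<inter> Y) w us \<longrightarrow> enumerates S (X \<inter> Y) w vs \<longrightarrow>
            (\<exists>x. nwc (map (\<lambda>u. (u, R u)) us) (map (\<lambda>v. (v, S v)) vs) x))
       \<and> (\<forall>W. nwc_join X Y R S W \<longrightarrow> marg W X = R \<and> marg W Y = S)"
proof -
  note P = assms(1) and WC = assms(2) and T = assms(3)
  have fsR: "finite (supp R)" and tR: "\<And>t. t \<in> supp R \<Longrightarrow> is_tuple D X t"
    using assms(6) unfolding is_krel_def by auto
  have fsS: "finite (supp S)" and tS: "\<And>t. t \<in> supp S \<Longrightarrow> is_tuple D Y t"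
    using assms(7) unfolding is_krel_def by auto
  have domR: "\<And>r. R r \<noteq> 0 \<Longrightarrow> dom r = X" using tR unfolding supp_def is_tuple_def by auto
  have domS: "\<And>r. S r \<noteq> 0 \<Longrightarrow> dom r = Y" using tS unfolding supp_def is_tuple_def by auto
  have mR: "\<And>w us. enumerates R (X \<inter> Y) w us \<Longrightarrow> sum_list (map R us) = marg R (X \<inter> Y) w"
    unfolding enumerates_def marg_def by (simp add: sum_list_distinct_conv_sum_set)
  have mS: "\<And>w vs. enumerates S (X \<inter> Y) w vs \<Longrightarrow> sum_list (map S vs) = marg S (X \<inter> Y) w"
    unfolding enumerates_def marg_def by (simp add: sum_list_distinct_conv_sum_set)
  have margposR: "r |` (X \<inter> Y) \<in> supp (marg R (X \<inter> Y))" if "R r \<noteq> 0" for r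
  proof -
    have "finite {r' \<in> supp R. r' |` (X \<inter> Y) = r |` (X \<inter> Y)}" using fsR by simp
    moreover have "r \<in> {r' \<in> supp R. r' |` (X \<inter> Y) = r |` (X \<inter> Y)}" using that by (simp add: supp_def)
    ultimately have "sum R {r' \<in> supp R. r' |` (X \<inter> Y) = r |` (X \<inter> Y)} \<noteq> 0"
      using pos_sum[OF P] that by blast
    then show ?thesis unfolding supp_def marg_def by simp
  qed
  have margposS: "s |` (X \<inter> Y) \<in> supp (marg R (X \<inter> Y))" if "S s \<noteq> 0" for s
  proof -
    have "finite {r' \<in> supp S. r' |` (X \<inter> Y) = s |` (X \<inter> Y)}" using fsS by simp
    moreover have "s \<in> {r' \<in> supp S. r' |` (X \<inter> Y) = s |` (X \<inter> Y)}" using that by (simp add: supp_def)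
    ultimately have "sum S {r' \<in> supp S. r' |` (X \<inter> Y) = s |` (X \<inter> Y)} \<noteq> 0"
      using pos_sum[OF P] that by blast
    then have "marg S (X \<inter> Y) (s |` (X \<inter> Y)) \<noteq> 0" unfolding supp_def marg_def by simp
    then show ?thesis using assms(8) unfolding supp_def by simp
  qed
  have part1: "\<forall>w\<in>supp (marg R (X \<inter> Y)). \<forall>us vs.
            enumerates R (X \<inter> Y) w us \<longrightarrow> enumerates S (X \<inter> Y) w vs \<longrightarrow>
            (\<exists>x. nwc (map (\<lambda>u. (u, R u)) us) (map (\<lambda>v. (v, S v)) vs) x)"
  proof (intro ballI allI impI)
    fix w us vs
    assume eR: "enumerates R (X \<inter> Y) w us" and eS: "enumerates S (X \<inter> Y) w vs"
    have "sum_list (map snd (map (\<lambda>u. (u, R u)) us)) = sum_list (map snd (map (\<lambda>v. (v, S v)) vs))"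
      using mR[OF eR] mS[OF eS] assms(8) by (simp add: o_def)
    moreover have "\<forall>p\<in>set (map (\<lambda>u. (u, R u)) us). snd p \<noteq> 0"
      using eR unfolding enumerates_def supp_def by auto
    moreover have "\<forall>p\<in>set (map (\<lambda>v. (v, S v)) vs). snd p \<noteq> 0"
      using eS unfolding enumerates_def supp_def by auto
    ultimately show "\<exists>x. nwc (map (\<lambda>u. (u, R u)) us) (map (\<lambda>v. (v, S v)) vs) x"
      using nwc_exists[OF P WC T] by blast
  qed
  have part2: "marg W X = R \<and> marg W Y = S" if J: "nwc_join X Y R S W" for W
  proof -
    obtain ul vl xs where H: "\<forall>w\<in>supp (marg R (X \<inter> Y)).
            enumerates R (X \<inter> Y) w (ul w) \<and> enumerates S (X \<inter> Y) w (vl w) \<and>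
            nwc (map (\<lambda>u. (u, R u)) (ul w)) (map (\<lambda>v. (v, S v)) (vl w)) (xs w)"
      and Wd0: "\<forall>t. W t =
            (if dom t = X \<union> Y \<and> t |` (X \<inter> Y) \<in> supp (marg R (X \<inter> Y))
                \<and> t |` X \<in> set (ul (t |` (X \<inter> Y))) \<and> t |` Y \<in> set (vl (t |` (X \<inter> Y)))
             then xs (t |` (X \<inter> Y)) (t |` X) (t |` Y) else 0)"
      using J unfolding nwc_join_def by (elim exE conjE) blast
    note Wd = Wd0[rule_format]
    have sums: "(\<forall>u\<in>set (ul w). sum_list (map (\<lambda>v. xs w u v) (vl w)) = R u) \<and>
                (\<forall>v\<in>set (vl w). sum_list (map (\<lambda>u. xs w u v) (ul w)) = S v)"
      if w: "w \<in> supp (marg R (X \<inter> Y))" for w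
    proof -
      have eR: "enumerates R (X \<inter> Y) w (ul w)" and eS: "enumerates S (X \<inter> Y) w (vl w)"
        and N: "nwc (map (\<lambda>u. (u, R u)) (ul w)) (map (\<lambda>v. (v, S v)) (vl w)) (xs w)"
        using H w by auto
      have "sum_list (map snd (map (\<lambda>u. (u, R u)) (ul w))) = sum_list (map snd (map (\<lambda>v. (v, S v)) (vl w)))"
        using mR[OF eR] mS[OF eS] assms(8) by (simp add: o_def)
      moreover have "\<forall>p\<in>set (map (\<lambda>u. (u, R u)) (ul w)). snd p \<noteq> 0"
        using eR unfolding enumerates_def supp_def by auto
      moreover have "\<forall>p\<in>set (map (\<lambda>v. (v, S v)) (vl w)). snd p \<noteq> 0"
        using eS unfolding enumerates_def supp_def by auto
      moreover have "distinct (map fst (map (\<lambda>u. (u, R u)) (ul w)))"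
        using eR unfolding enumerates_def by (simp add: o_def)
      moreover have "distinct (map fst (map (\<lambda>v. (v, S v)) (vl w)))"
        using eS unfolding enumerates_def by (simp add: o_def)
      ultimately show ?thesis using nwc_sums[OF P WC N] by (simp add: o_def)
    qed
    have Wnz: "dom t = X \<union> Y \<and> t |` (X \<inter> Y) \<in> supp (marg R (X \<inter> Y))
                \<and> t |` X \<in> set (ul (t |` (X \<inter> Y))) \<and> t |` Y \<in> set (vl (t |` (X \<inter> Y)))"
      if "W t \<noteq> 0" for t
      using that Wd[of t] by (auto split: if_splits)
    have WnzR: "R (t |` X) \<noteq> 0" and WnzS: "S (t |` Y) \<noteq> 0" if "W t \<noteq> 0" for t
      using Wnz[OF that] H unfolding enumerates_def supp_def by auto
    show ?thesis
    proof
      show "marg W X = R"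
      proof
        fix r
        show "marg W X r = R r"
        proof (cases "R r = 0")
          case True
          have "{t \<in> supp W. t |` X = r} = {}" using WnzR True unfolding supp_def by auto
          then show ?thesis using True unfolding marg_def by (metis sum.empty)
        next
          case False
          define w where "w = r |` (X \<inter> Y)"
          have w: "w \<in> supp (marg R (X \<inter> Y))" using margposR[OF False] w_def by simp
          have eR: "enumerates R (X \<inter> Y) w (ul w)" and eS: "enumerates S (X \<inter> Y) w (vl w)"
            using H w by auto
          have dr: "dom r = X" using domR[OF False] .
          have rin: "r \<in> set (ul w)" using eR False w_def unfolding enumerates_def supp_def by auto
          define V where "V = set (vl w)"
          have vp: "dom v = Y \<and> v |` (X \<inter> Y) = w" if "v \<in> V" for v
            using that eS domS unfolding V_def enumerates_def supp_def by auto
          have rest: "(r ++ v) |` X = r \<and> (r ++ v) |` Y = v" if "v \<in> V" for v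
            using map_add_restrict[OF dr, of v Y] vp[OF that] w_def by simp
          have Wrv: "W (r ++ v) = xs w r v" if "v \<in> V" for v
          proof -
            have rx: "(r ++ v) |` X = r" and ry: "(r ++ v) |` Y = v" using rest[OF that] by auto
            have "(r ++ v) |` (X \<inter> Y) = ((r ++ v) |` X) |` (X \<inter> Y)" by simp
            also have "\<dots> = w" unfolding rx w_def ..
            finally have rz: "(r ++ v) |` (X \<inter> Y) = w" .
            have dd: "dom (r ++ v) = X \<union> Y" using vp[OF that] dr by auto
            have vv: "v \<in> set (vl w)" using that V_def by simp
            show ?thesis unfolding Wd[of "r ++ v"] rz rx ry using dd w rin vv by simp
          qed
          have inj: "inj_on (\<lambda>v. r ++ v) V"
          proof (rule inj_onI)
            fix v1 v2 assume "v1 \<in> V" "v2 \<in> V" "r ++ v1 = r ++ v2"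
            then show "v1 = v2" using rest[of v1] rest[of v2] by metis
          qed
          have sub: "{t \<in> supp W. t |` X = r} \<subseteq> (\<lambda>v. r ++ v) ` V"
          proof
            fix t assume t: "t \<in> {t \<in> supp W. t |` X = r}"
            then have nz: "W t \<noteq> 0" and tx: "t |` X = r" unfolding supp_def by auto
            have "t |` (X \<inter> Y) = (t |` X) |` (X \<inter> Y)" by simp
            also have "\<dots> = w" unfolding tx w_def ..
            finally have "t |` (X \<inter> Y) = w" .
            then have "t |` Y \<in> V" using Wnz[OF nz] V_def by simp
            moreover have "t = r ++ (t |` Y)"
            proof -
              have e: "t = (t |` X) ++ (t |` Y)" using Wnz[OF nz] by (intro split_tuple) auto
              show ?thesis using e[unfolded tx] .
            qed
            ultimately show "t \<in> (\<lambda>v. r ++ v) ` V" by blast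
          qed
          have "marg W X r = sum W {t \<in> supp W. t |` X = r}" unfolding marg_def ..
          also have "\<dots> = sum W ((\<lambda>v. r ++ v) ` V)"
          proof (rule sum.mono_neutral_left)
            show "finite ((\<lambda>v. r ++ v) ` V)" unfolding V_def by simp
            show "{t \<in> supp W. t |` X = r} \<subseteq> (\<lambda>v. r ++ v) ` V" by (rule sub)
            show "\<forall>i\<in>(\<lambda>v. r ++ v) ` V - {t \<in> supp W. t |` X = r}. W i = 0"
            proof
              fix i assume "i \<in> (\<lambda>v. r ++ v) ` V - {t \<in> supp W. t |` X = r}"
              then obtain v where "v \<in> V" "i = r ++ v" "i \<notin> {t \<in> supp W. t |` X = r}" by blast
              then show "W i = 0" using rest[of v] unfolding supp_def by auto
            qed
          qed
          also have "\<dots> = sum (\<lambda>v. W (r ++ v)) V" using sum.reindex[OF inj] by simp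
          also have "\<dots> = sum (\<lambda>v. xs w r v) V" using Wrv by (intro sum.cong) auto
          also have "\<dots> = sum_list (map (\<lambda>v. xs w r v) (vl w))"
            using eS unfolding V_def enumerates_def by (simp add: sum_list_distinct_conv_sum_set)
          also have "\<dots> = R r" using sums[OF w] rin by simp
          finally show ?thesis .
        qed
      qed
    next
      show "marg W Y = S"
      proof
        fix s
        show "marg W Y s = S s"
        proof (cases "S s = 0")
          case True
          have "{t \<in> supp W. t |` Y = s} = {}" using WnzS True unfolding supp_def by auto
          then show ?thesis using True unfolding marg_def by (metis sum.empty)
        next
          case False
          define w where "w = s |` (X \<inter> Y)"
          have YXY: "Y \<inter> (X \<inter> Y) = X \<inter> Y" by blast
          have w: "w \<in> supp (marg R (X \<inter> Y))" using margposS[OF False] w_def by simp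
          have eR: "enumerates R (X \<inter> Y) w (ul w)" and eS: "enumerates S (X \<inter> Y) w (vl w)"
            using H w by auto
          have ds: "dom s = Y" using domS[OF False] .
          have sin: "s \<in> set (vl w)" using eS False w_def unfolding enumerates_def supp_def by auto
          define U where "U = set (ul w)"
          have up: "dom u = X \<and> u |` (X \<inter> Y) = w" if "u \<in> U" for u
            using that eR domR unfolding U_def enumerates_def supp_def by auto
          have rest: "(u ++ s) |` X = u \<and> (u ++ s) |` Y = s" if "u \<in> U" for u
            using map_add_restrict[of u X s Y] up[OF that] ds w_def by simp
          have Wus: "W (u ++ s) = xs w u s" if "u \<in> U" for u
          proof -
            have rx: "(u ++ s) |` X = u" and ry: "(u ++ s) |` Y = s" using rest[OF that] by auto
            have "(u ++ s) |` (X \<inter> Y) = ((u ++ s) |` Y) |` (X \<inter> Y)"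
              using YXY by (simp only: restrict_restrict)
            also have "\<dots> = w" unfolding ry w_def ..
            finally have rz: "(u ++ s) |` (X \<inter> Y) = w" .
            have dd: "dom (u ++ s) = X \<union> Y" using up[OF that] ds by auto
            have uu: "u \<in> set (ul w)" using that U_def by simp
            show ?thesis unfolding Wd[of "u ++ s"] rz rx ry using dd w sin uu by simp
          qed
          have inj: "inj_on (\<lambda>u. u ++ s) U"
          proof (rule inj_onI)
            fix u1 u2 assume "u1 \<in> U" "u2 \<in> U" "u1 ++ s = u2 ++ s"
            then show "u1 = u2" using rest[of u1] rest[of u2] by metis
          qed
          have sub: "{t \<in> supp W. t |` Y = s} \<subseteq> (\<lambda>u. u ++ s) ` U"
          proof
            fix t assume t: "t \<in> {t \<in> supp W. t |` Y = s}"
            then have nz: "W t \<noteq> 0" and ty: "t |` Y = s" unfolding supp_def by auto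
            have "t |` (X \<inter> Y) = (t |` Y) |` (X \<inter> Y)"
              using YXY by (simp only: restrict_restrict)
            also have "\<dots> = w" unfolding ty w_def ..
            finally have "t |` (X \<inter> Y) = w" .
            then have "t |` X \<in> U" using Wnz[OF nz] U_def by simp
            moreover have "t = (t |` X) ++ s"
            proof -
              have e: "t = (t |` X) ++ (t |` Y)" using Wnz[OF nz] by (intro split_tuple) auto
              show ?thesis using e[unfolded ty] .
            qed
            ultimately show "t \<in> (\<lambda>u. u ++ s) ` U" by blast
          qed
          have "marg W Y s = sum W {t \<in> supp W. t |` Y = s}" unfolding marg_def ..
          also have "\<dots> = sum W ((\<lambda>u. u ++ s) ` U)"
          proof (rule sum.mono_neutral_left)
            show "finite ((\<lambda>u. u ++ s) ` U)" unfolding U_def by simp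
            show "{t \<in> supp W. t |` Y = s} \<subseteq> (\<lambda>u. u ++ s) ` U" by (rule sub)
            show "\<forall>i\<in>(\<lambda>u. u ++ s) ` U - {t \<in> supp W. t |` Y = s}. W i = 0"
            proof
              fix i assume "i \<in> (\<lambda>u. u ++ s) ` U - {t \<in> supp W. t |` Y = s}"
              then obtain u where "u \<in> U" "i = u ++ s" "i \<notin> {t \<in> supp W. t |` Y = s}" by blast
              then show "W i = 0" using rest[of u] unfolding supp_def by auto
            qed
          qed
          also have "\<dots> = sum (\<lambda>u. W (u ++ s)) U" using sum.reindex[OF inj] by simp
          also have "\<dots> = sum (\<lambda>u. xs w u s) U" using Wus by (intro sum.cong) auto
          also have "\<dots> = sum_list (map (\<lambda>u. xs w u s) (ul w))"
            using eR unfolding U_def enumerates_def by (simp add: sum_list_distinct_conv_sum_set)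
          also have "\<dots> = S s" using sums[OF w] sin by simp
          finally show ?thesis .
        qed
      qed
    qed
  qed
  show ?thesis using part1 part2 by blast
qed

end
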